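(* Let $L$ be a finite-dimensional Lie algebra over a field $F$ and let $M$ be a maximal subalgebra of $L$. Then $M$ is a c-ideal of $L$ if and only if $\eta(L:M)=\dim(L/M)$.
   Context: For a subalgebra $B$ of $L$, $B_L$ denotes the core of $B$, the largest ideal of $L$ contained in $B$. A subalgebra $B$ is a c-ideal of $L$ if there is an ideal $C$ of $L$ with $L=B+C$ and $B\cap C\subseteq B_L$. For a nonzero subalgebra $X$, the strict core $k(X)$ is the sum of all ideals of $L$ that are proper subalgebras of $X$ (it is $0$ if there are none). A subalgebra $C$ is a completion of $M$ if $C\not\subseteq M$ but every proper subalgebra of $C$ that is an ideal of $L$ is contained in $M$; an ideal completion is a completion that is an ideal of $L$. The ideal index $\eta(L:M)$ is $\dim(C/k(C))$ for any ideal completion $C$ of $M$ (independent of the choice of $C$). *)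

theory Defs
  imports Complex_Main
begin

text \<open>A Lie algebra over a field 'a: the whole type 'b is the underlying space L,
  scalar multiplication s, Lie bracket br.\<close>

definition lie_algebra :: "('a::field \<Rightarrow> 'b::ab_group_add \<Rightarrow> 'b) \<Rightarrow> ('b \<Rightarrow> 'b \<Rightarrow> 'b) \<Rightarrow> bool" where
  "lie_algebra s br \<longleftrightarrow> vector_space s
     \<and> (\<forall>x y z. br (x + y) z = br x z + br y z)
     \<and> (\<forall>x y z. br x (y + z) = br x y + br x z)
     \<and> (\<forall>a x y. br (s a x) y = s a (br x y))
     \<and> (\<forall>a x y. br x (s a y) = s a (br x y))
     \<and> (\<forall>x. br x x = 0)
     \<and> (\<forall>x y z. br x (br y z) + br y (br z x) + br z (br x y) = 0)"

definition fin_dim :: "('a::field \<Rightarrow> 'b::ab_group_add \<Rightarrow> 'b) \<Rightarrow> bool" where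
  "fin_dim s \<longleftrightarrow> (\<exists>B. finite B \<and> module.span s B = UNIV)"

definition lie_subalgebra :: "('a::field \<Rightarrow> 'b::ab_group_add \<Rightarrow> 'b) \<Rightarrow> ('b \<Rightarrow> 'b \<Rightarrow> 'b) \<Rightarrow> 'b set \<Rightarrow> bool" where
  "lie_subalgebra s br B \<longleftrightarrow> module.subspace s B \<and> (\<forall>x\<in>B. \<forall>y\<in>B. br x y \<in> B)"

definition lie_ideal :: "('a::field \<Rightarrow> 'b::ab_group_add \<Rightarrow> 'b) \<Rightarrow> ('b \<Rightarrow> 'b \<Rightarrow> 'b) \<Rightarrow> 'b set \<Rightarrow> bool" where
  "lie_ideal s br I \<longleftrightarrow> module.subspace s I \<and> (\<forall>x. \<forall>y\<in>I. br x y \<in> I)"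

definition maximal_subalgebra :: "('a::field \<Rightarrow> 'b::ab_group_add \<Rightarrow> 'b) \<Rightarrow> ('b \<Rightarrow> 'b \<Rightarrow> 'b) \<Rightarrow> 'b set \<Rightarrow> bool" where
  "maximal_subalgebra s br M \<longleftrightarrow> lie_subalgebra s br M \<and> M \<noteq> UNIV
     \<and> (\<forall>B. lie_subalgebra s br B \<and> M \<subseteq> B \<longrightarrow> B = M \<or> B = UNIV)"

definition lie_core :: "('a::field \<Rightarrow> 'b::ab_group_add \<Rightarrow> 'b) \<Rightarrow> ('b \<Rightarrow> 'b \<Rightarrow> 'b) \<Rightarrow> 'b set \<Rightarrow> 'b set" where
  "lie_core s br B = module.span s (\<Union>{I. lie_ideal s br I \<and> I \<subseteq> B})"

definition c_ideal :: "('a::field \<Rightarrow> 'b::ab_group_add \<Rightarrow> 'b) \<Rightarrow> ('b \<Rightarrow> 'b \<Rightarrow> 'b) \<Rightarrow> 'b set \<Rightarrow> bool" where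
  "c_ideal s br B \<longleftrightarrow> lie_subalgebra s br B \<and>
     (\<exists>C. lie_ideal s br C \<and> {b + c | b c. b \<in> B \<and> c \<in> C} = UNIV \<and> B \<inter> C \<subseteq> lie_core s br B)"

definition strict_core :: "('a::field \<Rightarrow> 'b::ab_group_add \<Rightarrow> 'b) \<Rightarrow> ('b \<Rightarrow> 'b \<Rightarrow> 'b) \<Rightarrow> 'b set \<Rightarrow> 'b set" where
  "strict_core s br X = module.span s (\<Union>{I. lie_ideal s br I \<and> I \<subset> X})"

definition completion :: "('a::field \<Rightarrow> 'b::ab_group_add \<Rightarrow> 'b) \<Rightarrow> ('b \<Rightarrow> 'b \<Rightarrow> 'b) \<Rightarrow> 'b set \<Rightarrow> 'b set \<Rightarrow> bool" where
  "completion s br M C \<longleftrightarrow> lie_subalgebra s br C \<and> \<not> C \<subseteq> M \<and>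
     (\<forall>D. lie_subalgebra s br D \<and> D \<subset> C \<and> lie_ideal s br D \<longrightarrow> D \<subseteq> M)"

definition ideal_completion :: "('a::field \<Rightarrow> 'b::ab_group_add \<Rightarrow> 'b) \<Rightarrow> ('b \<Rightarrow> 'b \<Rightarrow> 'b) \<Rightarrow> 'b set \<Rightarrow> 'b set \<Rightarrow> bool" where
  "ideal_completion s br M C \<longleftrightarrow> completion s br M C \<and> lie_ideal s br C"

text \<open>Ideal index eta(L:M) = dim(C / k(C)) = dim C - dim k(C) for an (any) ideal completion C.\<close>
definition ideal_index :: "('a::field \<Rightarrow> 'b::ab_group_add \<Rightarrow> 'b) \<Rightarrow> ('b \<Rightarrow> 'b \<Rightarrow> 'b) \<Rightarrow> 'b set \<Rightarrow> nat" where
  "ideal_index s br M = (let C = (SOME C. ideal_completion s br M C) in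
     vector_space.dim s C - vector_space.dim s (strict_core s br C))"

end

theory Submission
  imports Defs
begin

locale lie_fd =
  fixes s :: "'a::field \<Rightarrow> 'b::ab_group_add \<Rightarrow> 'b" and br :: "'b \<Rightarrow> 'b \<Rightarrow> 'b"
  assumes LA: "lie_algebra s br" and FD: "fin_dim s"
begin

sublocale vector_space s using LA by (simp add: lie_algebra_def)

lemma basis_ex: "\<exists>B. finite B \<and> independent B \<and> span B = UNIV"
proof -
  obtain B where B: "finite B" "span B = UNIV" using FD by (auto simp: fin_dim_def)
  obtain B' where "B' \<subseteq> B" "independent B'" "B \<subseteq> span B'" using maximal_independent_subset by blast
  moreover have "span B' = UNIV"
    by (metis B(2) calculation(3) span_mono span_span top.extremum_uniqueI)
  ultimately show ?thesis using B(1) finite_subset by blast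
qed

sublocale fd: finite_dimensional_vector_space s "SOME B. finite B \<and> independent B \<and> span B = UNIV"
  using someI_ex[OF basis_ex] by unfold_locales auto

lemma addl: "br (x + y) z = br x z + br y z" using LA by (simp add: lie_algebra_def)
lemma addr: "br x (y + z) = br x y + br x z" using LA by (simp add: lie_algebra_def)
lemma scl: "br (s a x) y = s a (br x y)" using LA by (simp add: lie_algebra_def)
lemma scr: "br x (s a y) = s a (br x y)" using LA by (simp add: lie_algebra_def)
lemma alt: "br x x = 0" using LA by (simp add: lie_algebra_def)
lemma jac: "br x (br y z) + br y (br z x) + br z (br x y) = 0" using LA by (simp add: lie_algebra_def)

lemma zr[simp]: "br x 0 = 0" using addr[of x 0 0] by simp
lemma zl[simp]: "br 0 x = 0" using addl[of 0 0 x] by simp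
lemma anti: "br x y = - br y x"
proof -
  have "br (x+y) (x+y) = br x x + br x y + (br y x + br y y)" by (simp add: addl addr add.assoc)
  then have "br x y + br y x = 0" by (simp add: alt)
  then show ?thesis by (simp add: add_eq_0_iff2)
qed

lemma ideal_sub: "lie_ideal s br I \<Longrightarrow> subspace I"
  by (simp add: lie_ideal_def)
lemma ideal_l: "lie_ideal s br I \<Longrightarrow> y \<in> I \<Longrightarrow> br x y \<in> I"
  by (simp add: lie_ideal_def)
lemma ideal_r: "lie_ideal s br I \<Longrightarrow> y \<in> I \<Longrightarrow> br y x \<in> I"
  by (metis anti ideal_l ideal_sub subspace_neg)
lemma ideal_subalg: "lie_ideal s br I \<Longrightarrow> lie_subalgebra s br I"
  by (simp add: lie_ideal_def lie_subalgebra_def)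

lemma span_ideals_ideal:
  assumes "\<forall>I\<in>U. lie_ideal s br I"
  shows "lie_ideal s br (span (\<Union>U))"
  unfolding lie_ideal_def
proof (intro conjI allI ballI)
  show "subspace (span (\<Union>U))" by (rule subspace_span)
  fix x y assume "y \<in> span (\<Union>U)"
  then show "br x y \<in> span (\<Union>U)"
  proof (induct rule: span_induct)
    case base
    show ?case
    proof (rule subspaceI)
      show "0 \<in> {a. br x a \<in> span (\<Union>U)}" by (simp add: span_zero)
      show "a + b \<in> {a. br x a \<in> span (\<Union>U)}" if "a \<in> {a. br x a \<in> span (\<Union>U)}" "b \<in> {a. br x a \<in> span (\<Union>U)}" for a b
        using that by (simp add: addr span_add)
      show "s c a \<in> {a. br x a \<in> span (\<Union>U)}" if "a \<in> {a. br x a \<in> span (\<Union>U)}" for c a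
        using that by (simp add: scr span_scale)
    qed
  next
    case (step z)
    then obtain I where I: "I \<in> U" "z \<in> I" by (rule UnionE)
    then have "br x z \<in> I" using assms ideal_l by simp
    then have "br x z \<in> \<Union>U" using I(1) by (rule UnionI[rotated])
    then show ?case by (rule span_base)
  qed
qed

lemma core_ideal: "lie_ideal s br (lie_core s br M)"
  unfolding lie_core_def by (rule span_ideals_ideal) auto
lemma core_le: "subspace M \<Longrightarrow> lie_core s br M \<subseteq> M"
  unfolding lie_core_def by (rule span_minimal) (rule Union_least, simp)
lemma core_ge: "lie_ideal s br I \<Longrightarrow> I \<subseteq> M \<Longrightarrow> I \<subseteq> lie_core s br M"
  unfolding lie_core_def
  by (rule subset_trans[OF _ span_superset]) (rule Union_upper, simp)

lemma ideal_Int: "lie_ideal s br I \<Longrightarrow> lie_ideal s br J \<Longrightarrow> lie_ideal s br (I \<inter> J)"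
  by (simp add: lie_ideal_def subspace_inter)

lemma completion_ex:
  assumes M: "maximal_subalgebra s br M"
  shows "\<exists>C. ideal_completion s br M C"
proof -
  let ?P = "\<lambda>C. lie_ideal s br C \<and> \<not> C \<subseteq> M"
  have "M \<noteq> UNIV" using M unfolding maximal_subalgebra_def by blast
  moreover have "lie_ideal s br UNIV" unfolding lie_ideal_def by simp
  ultimately have "?P UNIV" by blast
  from ex_has_least_nat[of ?P UNIV dim, OF this] obtain C where
    C0: "?P C \<and> (\<forall>D. ?P D \<longrightarrow> dim C \<le> dim D)" by (elim exE)
  then have C: "?P C" "\<And>D. ?P D \<Longrightarrow> dim C \<le> dim D" by simp_all
  have "completion s br M C"
    unfolding completion_def
  proof (intro conjI allI impI)
    show "lie_subalgebra s br C" using C ideal_subalg by blast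
    show "\<not> C \<subseteq> M" using C by blast
    fix D assume D: "lie_subalgebra s br D \<and> D \<subset> C \<and> lie_ideal s br D"
    show "D \<subseteq> M"
    proof (rule ccontr)
      assume "\<not> D \<subseteq> M"
      then have d: "dim C \<le> dim D" using C D by blast
      have sD: "subspace D" using D ideal_sub by blast
      have sC: "subspace C" using C ideal_sub by blast
      have DC: "D \<subseteq> C" using D by blast
      have "D = C" using fd.subspace_dim_equal[OF sD sC DC] d by simp
      then show False using D by blast
    qed
  qed
  then show ?thesis using C unfolding ideal_completion_def by blast
qed


lemma main:
  assumes M: "maximal_subalgebra s br M" and C: "ideal_completion s br M C"
  shows "c_ideal s br M \<longleftrightarrow> dim C - dim (strict_core s br C) = dim (UNIV::'b set) - dim M"
proof -
  have subM: "lie_subalgebra s br M" using M unfolding maximal_subalgebra_def by blast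
  have sM: "subspace M" using subM unfolding lie_subalgebra_def by blast
  have clM: "\<And>x y. x \<in> M \<Longrightarrow> y \<in> M \<Longrightarrow> br x y \<in> M" using subM unfolding lie_subalgebra_def by blast
  have maxM: "\<And>B. lie_subalgebra s br B \<Longrightarrow> M \<subseteq> B \<Longrightarrow> B = M \<or> B = UNIV"
    using M unfolding maximal_subalgebra_def by blast
  have Cid: "lie_ideal s br C" using C unfolding ideal_completion_def by blast
  have sC: "subspace C" using Cid by (rule ideal_sub)
  have CnM: "\<not> C \<subseteq> M" using C unfolding ideal_completion_def completion_def by blast
  have Ccomp: "\<And>D. lie_ideal s br D \<Longrightarrow> D \<subset> C \<Longrightarrow> D \<subseteq> M"
    using C ideal_subalg unfolding ideal_completion_def completion_def by blast
  obtain c0 where c0: "c0 \<in> C" "c0 \<notin> M" using CnM by blast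
  define MC where "MC = {x + y |x y. x \<in> M \<and> y \<in> C}"
  have sMC: "subspace MC" unfolding MC_def by (rule subspace_sums[OF sM sC])
  have clMC: "br a b \<in> MC" if "a \<in> MC" "b \<in> MC" for a b
  proof -
    obtain m1 c1 where a: "a = m1 + c1" "m1 \<in> M" "c1 \<in> C" using \<open>a \<in> MC\<close> unfolding MC_def by blast
    obtain m2 c2 where b: "b = m2 + c2" "m2 \<in> M" "c2 \<in> C" using \<open>b \<in> MC\<close> unfolding MC_def by blast
    have e: "br a b = br m1 m2 + (br m1 c2 + br c1 (m2 + c2))"
      unfolding a b by (simp add: addl addr add.assoc)
    have "br m1 c2 \<in> C" using Cid b(3) by (rule ideal_l)
    moreover have "br c1 (m2 + c2) \<in> C" using Cid a(3) by (rule ideal_r)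
    ultimately have "br m1 c2 + br c1 (m2 + c2) \<in> C" using sC by (simp add: subspace_add)
    moreover have "br m1 m2 \<in> M" using a(2) b(2) by (rule clM)
    ultimately show ?thesis unfolding MC_def e by blast
  qed
  have "lie_subalgebra s br MC" unfolding lie_subalgebra_def using sMC clMC by blast
  moreover have "M \<subseteq> MC"
  proof
    fix m assume "m \<in> M"
    moreover have "m = m + 0" by simp
    moreover have "(0::'b) \<in> C" using sC by (rule subspace_0)
    ultimately show "m \<in> MC" unfolding MC_def by blast
  qed
  moreover have "c0 \<in> MC"
  proof -
    have "c0 = 0 + c0" by simp
    moreover have "(0::'b) \<in> M" using sM by (rule subspace_0)
    ultimately show ?thesis unfolding MC_def using c0(1) by blast
  qed
  ultimately have MCU: "MC = UNIV" using maxM c0(2) by blast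
  define kC where "kC = strict_core s br C"
  have skC: "subspace kC" unfolding kC_def strict_core_def by (rule subspace_span)
  have gen: "I \<subseteq> M \<inter> C" if "I \<in> {I. lie_ideal s br I \<and> I \<subset> C}" for I
    using that Ccomp by blast
  have kCsub: "kC \<subseteq> M \<inter> C" unfolding kC_def strict_core_def
    by (rule span_minimal[OF Union_least[OF gen] subspace_inter[OF sM sC]])
  have dimeq: "dim (UNIV::'b set) + dim (M \<inter> C) = dim M + dim C"
    using fd.dim_sums_Int[OF sM sC] MCU unfolding MC_def by simp
  have d1: "dim kC \<le> dim (M \<inter> C)" using kCsub by (rule fd.dim_subset)
  have d2: "dim (M \<inter> C) \<le> dim C" by (rule fd.dim_subset) blast
  have key: "c_ideal s br M \<longleftrightarrow> M \<inter> C \<subseteq> kC"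
  proof
    assume "M \<inter> C \<subseteq> kC"
    moreover have "kC \<subseteq> lie_core s br M" unfolding kC_def strict_core_def
    proof (rule span_minimal)
      show "subspace (lie_core s br M)" by (rule ideal_sub[OF core_ideal])
      show "\<Union> {I. lie_ideal s br I \<and> I \<subset> C} \<subseteq> lie_core s br M"
      proof (rule Union_least)
        fix I assume "I \<in> {I. lie_ideal s br I \<and> I \<subset> C}"
        then have "lie_ideal s br I" "I \<subseteq> M" using Ccomp by auto
        then show "I \<subseteq> lie_core s br M" by (rule core_ge)
      qed
    qed
    ultimately have "M \<inter> C \<subseteq> lie_core s br M" by (rule subset_trans)
    then have X: "lie_ideal s br C \<and> {b + c |b c. b \<in> M \<and> c \<in> C} = UNIV \<and> M \<inter> C \<subseteq> lie_core s br M"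
      using Cid MCU unfolding MC_def by (intro conjI)
    show "c_ideal s br M" unfolding c_ideal_def by (rule conjI[OF subM exI[where P="\<lambda>C. lie_ideal s br C \<and> {b + c |b c. b \<in> M \<and> c \<in> C} = UNIV \<and> M \<inter> C \<subseteq> lie_core s br M", OF X]])
  next
    assume "c_ideal s br M"
    then obtain D where Did: "lie_ideal s br D" and MDU: "{b + c |b c. b \<in> M \<and> c \<in> D} = UNIV"
      and MD: "M \<inter> D \<subseteq> lie_core s br M" unfolding c_ideal_def by blast
    define Lc where "Lc = lie_core s br M"
    have Lcid: "lie_ideal s br Lc" unfolding Lc_def by (rule core_ideal)
    have sLc: "subspace Lc" using Lcid by (rule ideal_sub)
    have LcM: "Lc \<subseteq> M" unfolding Lc_def using sM by (rule core_le)
    have sD: "subspace D" using Did by (rule ideal_sub)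
    have MCLc: "M \<inter> C \<subseteq> Lc"
    proof (cases "C \<subseteq> D")
      case True
      then show ?thesis using MD unfolding Lc_def by blast
    next
      case False
      have "C \<inter> D \<subseteq> M" using Ccomp[OF ideal_Int[OF Cid Did]] False by blast
      then have CDLc: "C \<inter> D \<subseteq> Lc" using MD unfolding Lc_def by blast
      define N where "N = {y. \<forall>d\<in>D. br y d \<in> Lc}"
      have CN: "C \<subseteq> N"
      proof
        fix c assume "c \<in> C"
        have "br c d \<in> Lc" if "d \<in> D" for d
        proof -
          have "br c d \<in> C" using Cid \<open>c \<in> C\<close> by (rule ideal_r)
          moreover have "br c d \<in> D" using Did \<open>d \<in> D\<close> by (rule ideal_l)
          ultimately show ?thesis using CDLc by blast
        qed
        then show "c \<in> N" unfolding N_def by blast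
      qed
      have sN: "subspace N"
      proof (rule subspaceI)
        show "0 \<in> N" unfolding N_def using subspace_0[OF sLc] by simp
        show "a + b \<in> N" if "a \<in> N" "b \<in> N" for a b
          using that unfolding N_def by (simp add: addl subspace_add[OF sLc])
        show "s c a \<in> N" if "a \<in> N" for c a
          using that unfolding N_def by (simp add: scl subspace_scale[OF sLc])
      qed
      have MNid: "lie_ideal s br (M \<inter> N)"
        unfolding lie_ideal_def
      proof (intro conjI allI ballI)
        show "subspace (M \<inter> N)" by (rule subspace_inter[OF sM sN])
        fix z y assume y: "y \<in> M \<inter> N"
        obtain m d0 where z: "z = m + d0" "m \<in> M" "d0 \<in> D"
        proof -
          have "z \<in> {b + c |b c. b \<in> M \<and> c \<in> D}" using MDU by simp
          then show ?thesis using that by blast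
        qed
        have "br m y \<in> M" using z(2) y by (simp add: clM)
        moreover have "br y d0 \<in> Lc" using y z(3) unfolding N_def by blast
        then have "- br y d0 \<in> M" using LcM subspace_neg[OF sLc] by blast
        then have "br d0 y \<in> M" by (simp add: anti[of d0 y])
        ultimately have "br m y + br d0 y \<in> M" by (rule subspace_add[OF sM])
        then have "br z y \<in> M" unfolding z(1) by (simp add: addl)
        moreover have "br (br z y) d \<in> Lc" if "d \<in> D" for d
        proof -
          have j: "(br z (br y d) + br y (br d z)) + br d (br z y) = 0" by (rule jac)
          have "br z (br y d) + br y (br d z) = - br d (br z y)"
            using add_eq_0_iff2[THEN iffD1, OF j] .
          also have "\<dots> = br (br z y) d" by (simp add: anti[of "br z y" d])
          finally have e: "br (br z y) d = br z (br y d) + br y (br d z)" by simp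
          have "br y d \<in> Lc" using y that unfolding N_def by blast
          then have "br z (br y d) \<in> Lc" using Lcid by (simp add: ideal_l)
          moreover have "br d z \<in> D" using Did that by (rule ideal_r)
          then have "br y (br d z) \<in> Lc" using y unfolding N_def by blast
          ultimately show ?thesis unfolding e by (rule subspace_add[OF sLc])
        qed
        then have "br z y \<in> N" unfolding N_def by blast
        ultimately show "br z y \<in> M \<inter> N" by blast
      qed
      have "M \<inter> N \<subseteq> Lc" unfolding Lc_def by (rule core_ge[OF MNid]) blast
      then show ?thesis using CN by blast
    qed
    have "Lc \<inter> C \<subseteq> kC" unfolding kC_def strict_core_def
    proof (rule subset_trans[OF _ span_superset], rule Union_upper, simp)
      show "lie_ideal s br (Lc \<inter> C) \<and> Lc \<inter> C \<subset> C"
        using ideal_Int[OF Lcid Cid] LcM c0 by blast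
    qed
    then show "M \<inter> C \<subseteq> kC" using MCLc by blast
  qed
  have "M \<inter> C \<subseteq> kC \<longleftrightarrow> dim kC = dim (M \<inter> C)"
  proof
    assume "M \<inter> C \<subseteq> kC" then show "dim kC = dim (M \<inter> C)" using kCsub by auto
  next
    assume "dim kC = dim (M \<inter> C)"
    then have "kC = M \<inter> C" using fd.subspace_dim_equal[OF skC subspace_inter[OF sM sC] kCsub] by simp
    then show "M \<inter> C \<subseteq> kC" by simp
  qed
  also have "\<dots> \<longleftrightarrow> dim C - dim kC = dim (UNIV::'b set) - dim M"
    using dimeq d1 d2 by linarith
  finally show ?thesis using key unfolding kC_def by simp
qed

end

theorem theorem2p5:
  fixes s :: "'a::field \<Rightarrow> 'b::ab_group_add \<Rightarrow> 'b"
    and br :: "'b \<Rightarrow> 'b \<Rightarrow> 'b"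
    and M :: "'b set"
  assumes "lie_algebra s br"
    and "fin_dim s"
    and "maximal_subalgebra s br M"
  shows "c_ideal s br M \<longleftrightarrow>
           ideal_index s br M = vector_space.dim s (UNIV :: 'b set) - vector_space.dim s M"
proof -
  interpret lie_fd s br using assms(1,2) by unfold_locales
  have "ideal_completion s br M (SOME C. ideal_completion s br M C)"
    using completion_ex[OF assms(3)] by (rule someI_ex)
  from main[OF assms(3) this] show ?thesis unfolding ideal_index_def Let_def by simp
qed

end
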